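(* Let $b>0$, $c$ be constants and $m\ge1$ an integer, and let $\phi(s)=\frac{\sqrt{b^2-s^2}}{b}+\sqrt{b^2-s^2}\int_0^s\frac{c\,t^{2m}}{(b^2-t^2)^{3/2}}dt$. On $\mathbb{R}^2\setminus\{0\}$ let $$\alpha=e^{\sigma}\sqrt{(y^1)^2+(y^2)^2},\quad \beta=\frac{b\,e^{\sigma}(x^2y^1-x^1y^2)}{\sqrt{(x^1)^2+(x^2)^2}},\quad \sigma=\Big(m-\frac12\Big)\ln[(x^1)^2+(x^2)^2].$$ Then $F=\alpha\phi(\beta/\alpha)$ is projectively flat and $\beta$ is not closed.
   Context: For a Riemannian metric $\alpha$ and a 1-form $\beta$, $\beta$ is closed if $d\beta=0$. The spray coefficients of a Finsler metric $F$ are $G^i=\frac14 g^{il}\{[F^2]_{x^ky^l}y^k-[F^2]_{x^l}\}$ with $g_{ij}=\frac12[F^2]_{y^iy^j}$. $F$ is projectively flat on an open $U\subset\mathbb{R}^n$ if $G^i=P(x,y)y^i$ in the standard coordinates of $U$ for some function $P$. *)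

theory Defs
  imports "HOL-Analysis.Analysis"
begin

definition pdx :: "2 \<Rightarrow> (real^2 \<Rightarrow> real^2 \<Rightarrow> real) \<Rightarrow> real^2 \<Rightarrow> real^2 \<Rightarrow> real" where
  "pdx k L x y = deriv (\<lambda>t. L (x + t *\<^sub>R axis k 1) y) 0"

definition pdy :: "2 \<Rightarrow> (real^2 \<Rightarrow> real^2 \<Rightarrow> real) \<Rightarrow> real^2 \<Rightarrow> real^2 \<Rightarrow> real" where
  "pdy l L x y = deriv (\<lambda>t. L x (y + t *\<^sub>R axis l 1)) 0"

definition fund_tensor :: "(real^2 \<Rightarrow> real^2 \<Rightarrow> real) \<Rightarrow> real^2 \<Rightarrow> real^2 \<Rightarrow> real^2^2" where
  "fund_tensor F x y = (\<chi> i j. (1/2) * pdy i (pdy j (\<lambda>x y. (F x y)^2)) x y)"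

definition spray :: "(real^2 \<Rightarrow> real^2 \<Rightarrow> real) \<Rightarrow> real^2 \<Rightarrow> real^2 \<Rightarrow> real^2" where
  "spray F x y = (let L = (\<lambda>x y. (F x y)^2); ginv = matrix_inv (fund_tensor F x y) in
     (\<chi> i. (1/4) * (\<Sum>l\<in>UNIV. ginv $ i $ l *
        ((\<Sum>k\<in>UNIV. pdx k (pdy l L) x y * y $ k) - pdx l L x y))))"

definition projectively_flat_on :: "((real^2) \<times> (real^2)) set \<Rightarrow> (real^2 \<Rightarrow> real^2 \<Rightarrow> real) \<Rightarrow> bool" where
  "projectively_flat_on S F \<longleftrightarrow> (\<exists>P. \<forall>(x,y)\<in>S. spray F x y = P x y *\<^sub>R y)"

text \<open>A 1-form beta(x,y) = b_i(x) y^i (coefficients b_i(x) = beta(x,e_i)) is closed on U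
  iff d beta = 0, i.e. d b_j / d x^i = d b_i / d x^j.\<close>
definition oneform_closed_on :: "(real^2) set \<Rightarrow> (real^2 \<Rightarrow> real^2 \<Rightarrow> real) \<Rightarrow> bool" where
  "oneform_closed_on U \<beta> \<longleftrightarrow>
     (\<forall>x\<in>U. \<forall>i j. pdx i (\<lambda>x y. \<beta> x (axis j 1)) x 0 = pdx j (\<lambda>x y. \<beta> x (axis i 1)) x 0)"

definition phi :: "real \<Rightarrow> real \<Rightarrow> nat \<Rightarrow> real \<Rightarrow> real" where
  "phi b c m s = sqrt (b^2 - s^2) / b + sqrt (b^2 - s^2) *
     interval_lebesgue_integral lborel (ereal 0) (ereal s)
       (\<lambda>t. c * t ^ (2*m) / (b^2 - t^2) powr (3/2))"

definition sigma :: "nat \<Rightarrow> real^2 \<Rightarrow> real" where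
  "sigma m x = (real m - 1/2) * ln ((x$1)^2 + (x$2)^2)"

definition alpha :: "nat \<Rightarrow> real^2 \<Rightarrow> real^2 \<Rightarrow> real" where
  "alpha m x y = exp (sigma m x) * sqrt ((y$1)^2 + (y$2)^2)"

definition beta :: "real \<Rightarrow> nat \<Rightarrow> real^2 \<Rightarrow> real^2 \<Rightarrow> real" where
  "beta b m x y = b * exp (sigma m x) * (x$2 * y$1 - x$1 * y$2) / sqrt ((x$1)^2 + (x$2)^2)"

definition Fmetric :: "real \<Rightarrow> real \<Rightarrow> nat \<Rightarrow> real^2 \<Rightarrow> real^2 \<Rightarrow> real" where
  "Fmetric b c m x y = alpha m x y * phi b c m (beta b m x y / alpha m x y)"

end

theory Submission
  imports Defs
begin

definition dot :: "real^2 \<Rightarrow> real^2 \<Rightarrow> real" where "dot u v = u$1 * v$1 + u$2 * v$2"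
definition bil :: "real^2 \<Rightarrow> real^2 \<Rightarrow> real" where "bil u v = u$2 * v$1 - u$1 * v$2"
definition nrm :: "real^2 \<Rightarrow> real" where "nrm v = sqrt (dot v v)"
definition nrm_h where "nrm_h v h = dot v h / nrm v"
definition nrm_hk where "nrm_hk v h k = dot k h / nrm v - dot v h * dot v k / nrm v ^ 3"
definition EE :: "nat \<Rightarrow> real^2 \<Rightarrow> real" where "EE m x = exp (sigma m x)"
definition EE_h where "EE_h m x h = (2*real m - 1) * EE m x * dot x h / dot x x"
definition EE_hk where "EE_hk m x h k = (2*real m - 1) * (EE_h m x k * dot x h / dot x x
   + EE m x * dot k h / dot x x - EE m x * dot x h * 2 * dot x k / (dot x x)^2)"
definition SS where "SS b x y = b * bil x y / (nrm x * nrm y)"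
definition SS_h where "SS_h b x y hx hy = b * (bil hx y + bil x hy) / (nrm x * nrm y)
   - SS b x y * (nrm_h x hx / nrm x + nrm_h y hy / nrm y)"
definition SS_hk where "SS_hk b x y hx hy kx ky =
   b * (bil hx ky + bil kx hy) / (nrm x * nrm y)
   - b * (bil hx y + bil x hy) * (nrm_h x kx / nrm x + nrm_h y ky / nrm y) / (nrm x * nrm y)
   - SS_h b x y kx ky * (nrm_h x hx / nrm x + nrm_h y hy / nrm y)
   - SS b x y * (nrm_hk x hx kx / nrm x - nrm_h x hx * nrm_h x kx / (nrm x)^2
                 + nrm_hk y hy ky / nrm y - nrm_h y hy * nrm_h y ky / (nrm y)^2)"
definition ph1 where "ph1 b c m s = (c * s ^ (2*m) - s * phi b c m s)/(b^2-s^2)"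
definition ph2 where "ph2 b c m s = (2*real m*c * s ^ (2*m-1) - phi b c m s + s * ph1 b c m s)/(b^2-s^2)"

definition FF where "FF b c m x y = EE m x * nrm y * phi b c m (SS b x y)"
definition FF_h where "FF_h b c m x y hx hy = EE_h m x hx * nrm y * phi b c m (SS b x y)
   + EE m x * nrm_h y hy * phi b c m (SS b x y) + EE m x * nrm y * ph1 b c m (SS b x y) * SS_h b x y hx hy"
definition FF_hk where "FF_hk b c m x y hx hy kx ky =
   EE_hk m x hx kx * nrm y * phi b c m (SS b x y) + EE_h m x hx * nrm_h y ky * phi b c m (SS b x y)
 + EE_h m x hx * nrm y * ph1 b c m (SS b x y) * SS_h b x y kx ky
 + EE_h m x kx * nrm_h y hy * phi b c m (SS b x y) + EE m x * nrm_hk y hy ky * phi b c m (SS b x y)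
 + EE m x * nrm_h y hy * ph1 b c m (SS b x y) * SS_h b x y kx ky
 + EE_h m x kx * nrm y * ph1 b c m (SS b x y) * SS_h b x y hx hy
 + EE m x * nrm_h y ky * ph1 b c m (SS b x y) * SS_h b x y hx hy
 + EE m x * nrm y * ph2 b c m (SS b x y) * SS_h b x y kx ky * SS_h b x y hx hy
 + EE m x * nrm y * ph1 b c m (SS b x y) * SS_hk b x y hx hy kx ky"

lemma dot_pos: "v \<noteq> 0 \<Longrightarrow> dot v v > 0"
proof -
  assume v: "v \<noteq> 0"
  have "v$1 \<noteq> 0 \<or> v$2 \<noteq> 0" using v by (metis exhaust_2 vec_eq_iff zero_index)
  then show "dot v v > 0" unfolding dot_def
    by (metis add_pos_nonneg add_nonneg_pos not_real_square_gt_zero zero_le_square)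
qed
lemma nrm_pos: "v \<noteq> 0 \<Longrightarrow> nrm v > 0"
  using dot_pos unfolding nrm_def by simp
lemma nrm_sq: "v \<noteq> 0 \<Longrightarrow> dot v v = nrm v ^ 2"
  unfolding nrm_def using dot_pos[of v] by simp

lemma dot0[simp]: "dot 0 v = 0" "dot v 0 = 0" unfolding dot_def by simp_all
lemma bil0[simp]: "bil 0 v = 0" "bil v 0 = 0" "bil v v = 0" unfolding bil_def by simp_all
lemma bil_swap: "bil h y = - bil y h" unfolding bil_def by simp
lemma dot_comm: "dot h y = dot y h" unfolding dot_def by simp
lemma decomp_dot: "dot y y * dot x h = dot x y * dot y h - bil x y * bil y h"
  unfolding dot_def bil_def by algebra
lemma decomp_bil: "dot y y * bil x h = bil x y * dot y h + dot x y * bil y h"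
  unfolding dot_def bil_def by algebra
lemma lagrange: "dot x y ^ 2 + bil x y ^ 2 = dot x x * dot y y"
  unfolding dot_def bil_def by algebra
lemma SS_bil: "x \<noteq> 0 \<Longrightarrow> y \<noteq> 0 \<Longrightarrow> b \<noteq> 0 \<Longrightarrow> bil x y = SS b x y * nrm x * nrm y / b"
  unfolding SS_def using nrm_pos[of x] nrm_pos[of y] by simp


lemma dot_line: "dot (x + t *\<^sub>R k) h = dot x h + t * dot k h" "dot h (x + t *\<^sub>R k) = dot h x + t * dot h k"
  unfolding dot_def by (simp_all add: algebra_simps)
lemma bil_line: "bil (x + t *\<^sub>R k) h = bil x h + t * bil k h" "bil h (x + t *\<^sub>R k) = bil h x + t * bil h k"
  unfolding bil_def by (simp_all add: algebra_simps)

lemma D_dot: "D = dot k h \<Longrightarrow> ((\<lambda>t. dot (x + t *\<^sub>R k) h) has_real_derivative D) (at 0)"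
  "D = dot h k \<Longrightarrow> ((\<lambda>t. dot h (x + t *\<^sub>R k)) has_real_derivative D) (at 0)"
  unfolding dot_line by (auto intro!: derivative_eq_intros)

lemma D_bil: "D = bil kx y + bil x ky \<Longrightarrow> ((\<lambda>t. bil (x + t *\<^sub>R kx) (y + t *\<^sub>R ky)) has_real_derivative D) (at 0)"
  "D = bil kx h \<Longrightarrow> ((\<lambda>t. bil (x + t *\<^sub>R kx) h) has_real_derivative D) (at 0)"
  "D = bil h kx \<Longrightarrow> ((\<lambda>t. bil h (x + t *\<^sub>R kx)) has_real_derivative D) (at 0)"
  unfolding bil_line bil_def by (auto intro!: derivative_eq_intros simp: algebra_simps)

lemma D_nrm: "v \<noteq> 0 \<Longrightarrow> D = nrm_h v k \<Longrightarrow> ((\<lambda>t. nrm (v + t *\<^sub>R k)) has_real_derivative D) (at 0)"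
proof -
  assume v: "v \<noteq> 0" and D: "D = nrm_h v k"
  have "((\<lambda>t. sqrt (dot (v + t *\<^sub>R k) (v + t *\<^sub>R k))) has_real_derivative
        inverse (sqrt (dot v v)) / 2 * (dot k v + dot v k)) (at 0)"
    using dot_pos[OF v]
    by (auto intro!: derivative_eq_intros D_dot simp: dot_line)
  then show ?thesis unfolding nrm_def[abs_def] D nrm_h_def
    by (simp add: dot_comm[of k v] field_simps)
qed

lemma sq_lt: "\<bar>s\<bar> < (b::real) \<Longrightarrow> s^2 < b^2"
  by (metis abs_ge_zero abs_power2 order_le_less_trans power2_abs power_strict_mono zero_less_numeral pos2 abs_less_iff)

lemma integral_deriv:
  fixes b c :: real
  assumes s: "\<bar>s\<bar> < b"
  shows "((\<lambda>u. interval_lebesgue_integral lborel (ereal 0) (ereal u)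
       (\<lambda>t. c * t ^ (2*m) / (b^2 - t^2) powr (3/2))) has_real_derivative
        c * s ^ (2*m) / (b^2 - s^2) powr (3/2)) (at s)"
proof -
  define e where "e = (\<bar>s\<bar> + b)/2"
  have e: "\<bar>s\<bar> < e" "e < b" "0 \<le> e" using s unfolding e_def by auto
  have cont: "continuous_on {-e..e} (\<lambda>t. c * t ^ (2*m) / (b^2 - t^2) powr (3/2))"
  proof (intro continuous_intros ballI)
    fix t assume "t \<in> {-e..e}"
    then have "\<bar>t\<bar> < b" using e by auto
    then have "t^2 < b^2" by (rule sq_lt)
    then show "b^2 - t^2 \<noteq> 0" "(b^2 - t^2) powr (3/2) \<noteq> 0" by auto
  qed
  have "((\<lambda>u. LBINT y=ereal 0..ereal u. c * y ^ (2*m) / (b^2 - y^2) powr (3/2)) has_vector_derivative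
        c * s ^ (2*m) / (b^2 - s^2) powr (3/2)) (at s within {-e..e})"
    by (rule interval_integral_FTC2[of "-e" 0 e "\<lambda>t. c * t ^ (2*m) / (b^2 - t^2) powr (3/2)" s])
       (use e cont in auto)
  then have "((\<lambda>u. LBINT y=ereal 0..ereal u. c * y ^ (2*m) / (b^2 - y^2) powr (3/2)) has_vector_derivative
        c * s ^ (2*m) / (b^2 - s^2) powr (3/2)) (at s within {-e<..<e})"
    by (rule has_vector_derivative_within_subset) auto
  then have "((\<lambda>u. LBINT y=ereal 0..ereal u. c * y ^ (2*m) / (b^2 - y^2) powr (3/2)) has_vector_derivative
        c * s ^ (2*m) / (b^2 - s^2) powr (3/2)) (at s)"
    using e by (subst (asm) at_within_open) auto
  then show ?thesis by (simp add: has_real_derivative_iff_has_vector_derivative)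
qed

lemma phi_deriv:
  assumes s: "\<bar>s\<bar> < b"
  shows "(phi b c m has_real_derivative ph1 b c m s) (at s)"
proof -
  have d: "b^2 - s^2 > 0" using sq_lt[OF s] by simp
  have b: "b > 0" using s by linarith
  define sq where "sq = sqrt (b^2 - s^2)"
  have sq: "sq > 0" "sq^2 = b^2 - s^2" using d unfolding sq_def by auto
  have pw: "(b^2 - s^2) powr (3/2) = (b^2 - s^2) * sq"
  proof -
    have "(b^2 - s^2) powr (3/2) = (b^2 - s^2) powr 1 * (b^2 - s^2) powr (1/2)"
      by (subst powr_add[symmetric]) simp
    also have "\<dots> = (b^2 - s^2) * (b^2 - s^2) powr (1/2)" using d by simp
    also have "\<dots> = (b^2 - s^2) * sq" using d by (simp add: powr_half_sqrt sq_def)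
    finally show ?thesis .
  qed
  define I where "I = (\<lambda>u. interval_lebesgue_integral lborel (ereal 0) (ereal u)
       (\<lambda>t. c * t ^ (2*m) / (b^2 - t^2) powr (3/2)))"
  define sf where "sf = (\<lambda>u. sqrt (b^2 - u^2))"
  have phiI: "phi b c m = (\<lambda>u. sf u / b + sf u * I u)"
    unfolding phi_def I_def sf_def by auto
  have dsf: "(sf has_real_derivative - s / sq) (at s)"
    unfolding sf_def sq_def using d
    by (auto intro!: derivative_eq_intros simp: field_simps)
  have dI: "(I has_real_derivative c * s ^ (2*m) / ((b^2 - s^2) * sq)) (at s)"
    using integral_deriv[OF s, of c m] unfolding I_def pw .
  have "((\<lambda>u. sf u / b + sf u * I u) has_real_derivative
      (- s / sq) / b + ((- s / sq) * I s + (c * s ^ (2*m) / ((b^2 - s^2) * sq)) * sf s)) (at s)"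
    by (intro DERIV_add DERIV_cdivide DERIV_mult dsf dI)
  moreover have "(- s / sq) / b + ((- s / sq) * I s + (c * s ^ (2*m) / ((b^2 - s^2) * sq)) * sf s)
     = ph1 b c m s"
  proof -
    have sfs: "sf s = sq" unfolding sf_def sq_def ..
    have ph: "phi b c m s = sq / b + sq * I s" unfolding phiI sfs ..
    have ne: "sq \<noteq> 0" "b \<noteq> 0" "b^2 - s^2 \<noteq> 0" using sq b d by auto
    show ?thesis unfolding ph1_def sfs ph sq(2)[symmetric]
      using ne(1,2) apply (simp add: field_simps)
      by (simp add: algebra_simps power2_eq_square power4_eq_xxxx)
  qed
  ultimately show ?thesis unfolding phiI by simp
qed


lemma ph1_deriv:
  assumes s: "\<bar>s\<bar> < b" and m: "m \<ge> 1"
  shows "(ph1 b c m has_real_derivative ph2 b c m s) (at s)"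
proof -
  have d: "b^2 - s^2 > 0" using sq_lt[OF s] by simp
  have "((\<lambda>u. (c * u ^ (2*m) - u * phi b c m u) / (b^2 - u^2)) has_real_derivative
     ((c * (real (2*m) * s ^ (2*m - Suc 0)) - (s * ph1 b c m s + 1 * phi b c m s)) * (b^2 - s^2)
       - (c * s ^ (2*m) - s * phi b c m s) * (0 - real 2 * s ^ (2 - Suc 0))) / ((b^2 - s^2) * (b^2 - s^2))) (at s)"
    using d
    by (intro DERIV_divide DERIV_diff DERIV_cmult DERIV_pow DERIV_mult' DERIV_ident phi_deriv s DERIV_const) auto
  moreover
  define D where "D = b^2 - s^2"
  have D: "D \<noteq> 0" using d D_def by simp
  have e: "c * s ^ (2*m) - s * phi b c m s = ph1 b c m s * D" using D unfolding D_def by (simp add: ph1_def)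
  have "((c * (real (2*m) * s ^ (2*m - Suc 0)) - (s * ph1 b c m s + 1 * phi b c m s)) * (b^2 - s^2)
       - (c * s ^ (2*m) - s * phi b c m s) * (0 - real 2 * s ^ (2 - Suc 0))) / ((b^2 - s^2) * (b^2 - s^2))
     = ph2 b c m s"
    unfolding e ph2_def D_def[symmetric] using D by (simp add: field_simps)
  ultimately show ?thesis unfolding ph1_def[abs_def] by simp
qed



lemma D_dot2: "D = 2 * dot x k \<Longrightarrow> ((\<lambda>t. dot (x + t *\<^sub>R k) (x + t *\<^sub>R k)) has_real_derivative D) (at 0)"
  unfolding dot_def by (auto intro!: derivative_eq_intros simp: algebra_simps)

lemma T_nrm_h: "v \<noteq> 0 \<Longrightarrow> ((\<lambda>t. nrm_h (v + t *\<^sub>R k) h) has_real_derivative nrm_hk v h k) (at 0)"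
  unfolding nrm_h_def[abs_def] nrm_hk_def
  apply (rule derivative_eq_intros D_dot D_nrm refl | assumption)+
  using nrm_pos[of v] by (auto simp: nrm_h_def field_simps power3_eq_cube)

lemma sigma_dot: "sigma m x = (real m - 1/2) * ln (dot x x)"
  unfolding sigma_def dot_def by (simp add: power2_eq_square)

lemma T_EE: "x \<noteq> 0 \<Longrightarrow> ((\<lambda>t. EE m (x + t *\<^sub>R k)) has_real_derivative EE_h m x k) (at 0)"
proof -
  assume x: "x \<noteq> 0"
  have p: "dot x x > 0" using dot_pos x by auto
  have "((\<lambda>t. ln (dot (x + t *\<^sub>R k) (x + t *\<^sub>R k))) has_real_derivative 1 / dot x x * (2 * dot x k)) (at 0)"
    using DERIV_chain2[OF DERIV_ln_divide D_dot2[OF refl, of x k]] p by simp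
  then have "((\<lambda>t. (real m - 1/2) * ln (dot (x + t *\<^sub>R k) (x + t *\<^sub>R k))) has_real_derivative
       (real m - 1/2) * (1 / dot x x * (2 * dot x k))) (at 0)" by (rule DERIV_cmult)
  then have "((\<lambda>t. exp ((real m - 1/2) * ln (dot (x + t *\<^sub>R k) (x + t *\<^sub>R k)))) has_real_derivative
       exp ((real m - 1/2) * ln (dot x x)) * ((real m - 1/2) * (1 / dot x x * (2 * dot x k)))) (at 0)"
    using DERIV_fun_exp by fastforce
  then show ?thesis unfolding EE_def[abs_def] sigma_dot EE_h_def
    by (rule DERIV_cong) (use p in \<open>simp add: field_simps\<close>)
qed

lemma T_EE_h: "x \<noteq> 0 \<Longrightarrow> ((\<lambda>t. EE_h m (x + t *\<^sub>R k) h) has_real_derivative EE_hk m x h k) (at 0)"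
  unfolding EE_h_def[abs_def] EE_hk_def
  apply (rule derivative_eq_intros D_dot D_dot2 T_EE refl | assumption)+
  using dot_pos[of x] by (simp_all add: dot_comm[of k x] EE_h_def field_simps power2_eq_square)

lemma T_SS: "x \<noteq> 0 \<Longrightarrow> y \<noteq> 0 \<Longrightarrow>
   ((\<lambda>t. SS b (x + t *\<^sub>R kx) (y + t *\<^sub>R ky)) has_real_derivative SS_h b x y kx ky) (at 0)"
  unfolding SS_def[abs_def] SS_h_def
  apply (rule derivative_eq_intros D_bil D_nrm refl | assumption)+
  using nrm_pos[of x] nrm_pos[of y] by (simp_all add: SS_def nrm_h_def field_simps)


lemma D_nrm_h: "v \<noteq> 0 \<Longrightarrow> D = nrm_hk v h k \<Longrightarrow> ((\<lambda>t. nrm_h (v + t *\<^sub>R k) h) has_real_derivative D) (at 0)"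
  using T_nrm_h by simp
lemma D_EE: "x \<noteq> 0 \<Longrightarrow> D = EE_h m x k \<Longrightarrow> ((\<lambda>t. EE m (x + t *\<^sub>R k)) has_real_derivative D) (at 0)"
  using T_EE by simp
lemma D_EE_h: "x \<noteq> 0 \<Longrightarrow> D = EE_hk m x h k \<Longrightarrow> ((\<lambda>t. EE_h m (x + t *\<^sub>R k) h) has_real_derivative D) (at 0)"
  using T_EE_h by simp
lemma D_SS: "x \<noteq> 0 \<Longrightarrow> y \<noteq> 0 \<Longrightarrow> D = SS_h b x y kx ky \<Longrightarrow>
   ((\<lambda>t. SS b (x + t *\<^sub>R kx) (y + t *\<^sub>R ky)) has_real_derivative D) (at 0)"
  using T_SS by simp

lemma nrm_ne: "v \<noteq> 0 \<Longrightarrow> nrm v \<noteq> 0" using nrm_pos by force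

lemma T_SS_h: assumes "x \<noteq> 0" "y \<noteq> 0" shows
   "((\<lambda>t. SS_h b (x + t *\<^sub>R kx) (y + t *\<^sub>R ky) hx hy) has_real_derivative SS_hk b x y hx hy kx ky) (at 0)"
  unfolding SS_h_def[abs_def]
  apply (rule DERIV_cong)
  apply (rule derivative_eq_intros D_bil D_nrm D_SS D_nrm_h refl assms | (simp add: nrm_ne assms; fail))+
  unfolding SS_hk_def
  using nrm_pos[OF assms(1)] nrm_pos[OF assms(2)] apply (simp add: field_simps)
  by algebra

lemma D_SS_h: "x \<noteq> 0 \<Longrightarrow> y \<noteq> 0 \<Longrightarrow> D = SS_hk b x y hx hy kx ky \<Longrightarrow>
   ((\<lambda>t. SS_h b (x + t *\<^sub>R kx) (y + t *\<^sub>R ky) hx hy) has_real_derivative D) (at 0)"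
  using T_SS_h by simp

lemma chain0: "(f has_real_derivative Da) (at s) \<Longrightarrow> (g has_real_derivative Db) (at 0) \<Longrightarrow> g 0 = s \<Longrightarrow>
  ((\<lambda>t. f (g t)) has_real_derivative Da * Db) (at 0)"
  using DERIV_chain2 by blast

lemma D_phiSS: assumes "x \<noteq> 0" "y \<noteq> 0" "\<bar>SS b x y\<bar> < b" "D = ph1 b c m (SS b x y) * SS_h b x y kx ky"
  shows "((\<lambda>t. phi b c m (SS b (x + t *\<^sub>R kx) (y + t *\<^sub>R ky))) has_real_derivative D) (at 0)"
  unfolding assms(4) using assms(1-3) by (intro chain0[OF phi_deriv T_SS]) auto

lemma D_ph1SS: assumes "x \<noteq> 0" "y \<noteq> 0" "\<bar>SS b x y\<bar> < b" "m \<ge> 1"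
   "D = ph2 b c m (SS b x y) * SS_h b x y kx ky"
  shows "((\<lambda>t. ph1 b c m (SS b (x + t *\<^sub>R kx) (y + t *\<^sub>R ky))) has_real_derivative D) (at 0)"
  unfolding assms(5) using assms(1-4) by (intro chain0[OF ph1_deriv T_SS]) auto

lemma T_FF: assumes "x \<noteq> 0" "y \<noteq> 0" "\<bar>SS b x y\<bar> < b" shows
   "((\<lambda>t. FF b c m (x + t *\<^sub>R kx) (y + t *\<^sub>R ky)) has_real_derivative FF_h b c m x y kx ky) (at 0)"
  unfolding FF_def[abs_def]
  apply (rule DERIV_cong)
  apply (rule derivative_eq_intros D_nrm D_EE D_phiSS refl assms)+
  by (auto simp: FF_h_def algebra_simps)

lemma T_FF_h: assumes "x \<noteq> 0" "y \<noteq> 0" "\<bar>SS b x y\<bar> < b" "m \<ge> 1" shows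
   "((\<lambda>t. FF_h b c m (x + t *\<^sub>R kx) (y + t *\<^sub>R ky) hx hy) has_real_derivative FF_hk b c m x y hx hy kx ky) (at 0)"
  unfolding FF_h_def[abs_def]
  apply (rule DERIV_cong)
  apply (rule derivative_eq_intros D_nrm D_EE D_EE_h D_nrm_h D_phiSS D_ph1SS D_SS_h refl assms)+
  by (auto simp: FF_hk_def algebra_simps)

lemma H_gen:
  assumes "x \<noteq> 0" "y \<noteq> 0" "\<bar>SS b x y\<bar> < b" "m \<ge> 1"
  shows "FF_hk b c m x y 0 h y 0 = FF_h b c m x y h 0"
proof -
  have b: "b > 0" using assms(3) by linarith
  have p: "nrm x > 0" "nrm y > 0" using assms nrm_pos by auto
  have "\<bar>SS b x y\<bar>^2 < b^2" using assms(3) by (intro power_strict_mono) auto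
  then have d: "b^2 - SS b x y ^ 2 \<noteq> 0" by simp
  define S where "S = SS b x y"
  define W where "W = c * S^(2*m-1)"
  have cs: "c * S^(2*m) = S * W" unfolding W_def using assms(4)
    by (metis (no_types, lifting) Suc_diff_1 mult.left_commute nat_0_less_mult_iff pos2 power_Suc
      less_le_trans zero_less_one)
  define D where "D = b^2 - S^2"
  have D: "D \<noteq> 0" using d S_def D_def by simp
  have o1: "ph1 b c m S = (S * W - S * phi b c m S)/D" using cs by (simp add: ph1_def D_def)
  have o2: "ph2 b c m S = (2 * real m * W - phi b c m S + S * ph1 b c m S)/D"
    using W_def by (simp add: ph2_def D_def)
  have yy: "dot y y = nrm y ^ 2" "dot x x = nrm x ^ 2" using nrm_sq assms by auto
  have dx: "dot x h = (dot x y * dot y h - bil x y * bil y h) / nrm y ^ 2"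
    using decomp_dot[of y x h] p yy by (simp add: field_simps)
  have bx: "bil x h = (bil x y * dot y h + dot x y * bil y h) / nrm y ^ 2"
    using decomp_bil[of y x h] p yy by (simp add: field_simps)
  have U: "bil x y = S * nrm x * nrm y / b" using SS_bil assms b S_def by auto
  have lag: "b^2 * dot x y ^ 2 = nrm x ^ 2 * nrm y ^ 2 * D"
    using lagrange[of x y] yy U b unfolding D_def by (simp add: field_simps)
  show ?thesis unfolding FF_hk_def EE_hk_def EE_h_def nrm_h_def nrm_hk_def SS_h_def SS_hk_def FF_h_def
    using p D b
    apply (simp add: dx bx bil_swap[of h y] dot_comm[of h y] dot_comm[of y x] flip: S_def)
    apply (simp add: U yy o2)
    apply (simp add: o1)
    apply (simp add: field_simps)
    using lag D_def apply algebra
    done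
qed


lemma E1g:
  assumes "x \<noteq> 0" "y \<noteq> 0" "b > 0"
  shows "FF_h b c m x y 0 y = FF b c m x y"
proof -
  have p: "nrm x > 0" "nrm y > 0" using assms nrm_pos by auto
  have yy: "dot y y = nrm y ^ 2" "dot x x = nrm x ^ 2" using nrm_sq assms by auto
  have U: "bil x y = SS b x y * nrm x * nrm y / b" using SS_bil assms by auto
  show ?thesis unfolding FF_h_def FF_def EE_h_def nrm_h_def SS_h_def
    using p assms(3) apply (simp add: yy U field_simps)
    apply algebra done
qed

lemma E2g:
  assumes "x \<noteq> 0" "y \<noteq> 0" "b > 0"
  shows "FF_hk b c m x y 0 y 0 h = 0"
proof -
  have p: "nrm x > 0" "nrm y > 0" using assms nrm_pos by auto
  have yy: "dot y y = nrm y ^ 2" "dot x x = nrm x ^ 2" using nrm_sq assms by auto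
  have U: "bil x y = SS b x y * nrm x * nrm y / b" using SS_bil assms by auto
  show ?thesis unfolding FF_hk_def EE_hk_def EE_h_def nrm_h_def nrm_hk_def SS_h_def SS_hk_def
    using p assms(3)
    apply (simp add: bil_swap[of h y] dot_comm[of h y])
    apply (simp add: yy U field_simps)
    apply algebra done
qed

lemma LinA:
  assumes "x \<noteq> 0" "y \<noteq> 0"
  shows "FF_hk b c m x y 0 (axis 1 1) 0 k * y$1 + FF_hk b c m x y 0 (axis 2 1) 0 k * y$2 = FF_hk b c m x y 0 y 0 k"
  unfolding FF_hk_def EE_hk_def EE_h_def nrm_h_def nrm_hk_def SS_h_def SS_hk_def
  by (simp add: axis_def dot_def bil_def algebra_simps add_divide_distrib diff_divide_distrib)


lemma LinB:
  shows "FF_hk b c m x y 0 h (axis 1 1) 0 * y$1 + FF_hk b c m x y 0 h (axis 2 1) 0 * y$2 = FF_hk b c m x y 0 h y 0"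
  unfolding FF_hk_def EE_hk_def EE_h_def nrm_h_def nrm_hk_def SS_h_def SS_hk_def
  by (simp add: axis_def dot_def bil_def algebra_simps add_divide_distrib diff_divide_distrib)
lemma LinC:
  shows "FF_h b c m x y 0 (axis 1 1) * y$1 + FF_h b c m x y 0 (axis 2 1) * y$2 = FF_h b c m x y 0 y"
  unfolding FF_h_def EE_h_def nrm_h_def SS_h_def
  by (simp add: axis_def dot_def bil_def algebra_simps add_divide_distrib diff_divide_distrib)
lemma LinD:
  shows "FF_h b c m x y (axis 1 1) 0 * y$1 + FF_h b c m x y (axis 2 1) 0 * y$2 = FF_h b c m x y y 0"
  unfolding FF_h_def EE_h_def nrm_h_def SS_h_def
  by (simp add: axis_def dot_def bil_def algebra_simps add_divide_distrib diff_divide_distrib)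


definition WW where "WW b x y \<longleftrightarrow> x \<noteq> 0 \<and> y \<noteq> 0 \<and> \<bar>SS b x y\<bar> < b"

lemma ev_WW:
  assumes "WW b x y"
  shows "eventually (\<lambda>t. WW b (x + t *\<^sub>R kx) (y + t *\<^sub>R ky)) (nhds 0)"
proof -
  from assms have x: "x \<noteq> 0" and y: "y \<noteq> 0" and s: "\<bar>SS b x y\<bar> < b" by (auto simp: WW_def)
  have c1: "((\<lambda>t. x + t *\<^sub>R kx) \<longlongrightarrow> x + 0 *\<^sub>R kx) (at 0)" by (intro tendsto_intros)
  have c2: "((\<lambda>t. y + t *\<^sub>R ky) \<longlongrightarrow> y + 0 *\<^sub>R ky) (at 0)" by (intro tendsto_intros)
  have e1: "eventually (\<lambda>t. x + t *\<^sub>R kx \<noteq> 0) (at 0)"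
    using tendsto_imp_eventually_ne[OF c1] x by simp
  have e2: "eventually (\<lambda>t. y + t *\<^sub>R ky \<noteq> 0) (at 0)"
    using tendsto_imp_eventually_ne[OF c2] y by simp
  have "isCont (\<lambda>t. SS b (x + t *\<^sub>R kx) (y + t *\<^sub>R ky)) 0"
    by (rule DERIV_isCont[OF T_SS[OF x y]])
  then have "((\<lambda>t. SS b (x + t *\<^sub>R kx) (y + t *\<^sub>R ky)) \<longlongrightarrow> SS b x y) (at 0)"
    unfolding isCont_def by simp
  then have "((\<lambda>t. \<bar>SS b (x + t *\<^sub>R kx) (y + t *\<^sub>R ky)\<bar>) \<longlongrightarrow> \<bar>SS b x y\<bar>) (at 0)"
    by (rule tendsto_rabs)
  then have e3: "eventually (\<lambda>t. \<bar>SS b (x + t *\<^sub>R kx) (y + t *\<^sub>R ky)\<bar> < b) (at 0)"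
    using s by (rule order_tendstoD(2))
  have "eventually (\<lambda>t. WW b (x + t *\<^sub>R kx) (y + t *\<^sub>R ky)) (at 0)"
    using e1 e2 e3 unfolding WW_def by eventually_elim auto
  then show ?thesis unfolding eventually_nhds_conv_at using assms by simp
qed

lemma DL:
  assumes "WW b x y"
  shows "((\<lambda>t. (FF b c m (x + t *\<^sub>R kx) (y + t *\<^sub>R ky))^2) has_real_derivative
     2 * FF b c m x y * FF_h b c m x y kx ky) (at 0)"
proof -
  from assms have x: "x \<noteq> 0" and y: "y \<noteq> 0" and s: "\<bar>SS b x y\<bar> < b" by (auto simp: WW_def)
  show ?thesis
    by (rule DERIV_cong[OF DERIV_power[OF T_FF[OF x y s]]]) simp
qed

lemma DL2:
  assumes "WW b x y" "m \<ge> 1"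
  shows "((\<lambda>t. 2 * FF b c m (x + t *\<^sub>R kx) (y + t *\<^sub>R ky) * FF_h b c m (x + t *\<^sub>R kx) (y + t *\<^sub>R ky) hx hy)
     has_real_derivative
     2 * FF_h b c m x y kx ky * FF_h b c m x y hx hy + 2 * FF b c m x y * FF_hk b c m x y hx hy kx ky) (at 0)"
proof -
  from assms have x: "x \<noteq> 0" and y: "y \<noteq> 0" and s: "\<bar>SS b x y\<bar> < b" by (auto simp: WW_def)
  show ?thesis
    by (rule DERIV_cong[OF DERIV_mult[OF DERIV_cmult[OF T_FF[OF x y s]] T_FF_h[OF x y s assms(2)]]])
      (simp add: algebra_simps)
qed

lemma pdy_L:
  assumes "WW b x y"
  shows "pdy j (\<lambda>x y. (FF b c m x y)^2) x y = 2 * FF b c m x y * FF_h b c m x y 0 (axis j 1)"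
  using DL[OF assms, of c m 0 "axis j 1"] unfolding pdy_def by (simp add: DERIV_imp_deriv)

lemma pdx_L:
  assumes "WW b x y"
  shows "pdx k (\<lambda>x y. (FF b c m x y)^2) x y = 2 * FF b c m x y * FF_h b c m x y (axis k 1) 0"
  using DL[OF assms, of c m "axis k 1" 0] unfolding pdx_def by (simp add: DERIV_imp_deriv)

lemma pdy_pdy_L:
  assumes "WW b x y" "m \<ge> 1"
  shows "pdy i (pdy j (\<lambda>x y. (FF b c m x y)^2)) x y =
    2 * FF_h b c m x y 0 (axis i 1) * FF_h b c m x y 0 (axis j 1) + 2 * FF b c m x y * FF_hk b c m x y 0 (axis j 1) 0 (axis i 1)"
proof -
  have ev: "eventually (\<lambda>t. pdy j (\<lambda>x y. (FF b c m x y)^2) x (y + t *\<^sub>R axis i 1) =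
      2 * FF b c m (x + t *\<^sub>R 0) (y + t *\<^sub>R axis i 1) * FF_h b c m (x + t *\<^sub>R 0) (y + t *\<^sub>R axis i 1) 0 (axis j 1)) (nhds 0)"
    using ev_WW[OF assms(1), of 0 "axis i 1"] by eventually_elim (simp add: pdy_L)
  show ?thesis unfolding pdy_def[of i]
    using deriv_cong_ev[OF ev refl] DERIV_imp_deriv[OF DL2[OF assms, where c=c and kx=0 and ky="axis i 1" and hx=0 and hy="axis j 1"]]
    by simp
qed

lemma pdx_pdy_L:
  assumes "WW b x y" "m \<ge> 1"
  shows "pdx k (pdy l (\<lambda>x y. (FF b c m x y)^2)) x y =
    2 * FF_h b c m x y (axis k 1) 0 * FF_h b c m x y 0 (axis l 1) + 2 * FF b c m x y * FF_hk b c m x y 0 (axis l 1) (axis k 1) 0"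
proof -
  have ev: "eventually (\<lambda>t. pdy l (\<lambda>x y. (FF b c m x y)^2) (x + t *\<^sub>R axis k 1) y =
      2 * FF b c m (x + t *\<^sub>R axis k 1) (y + t *\<^sub>R 0) * FF_h b c m (x + t *\<^sub>R axis k 1) (y + t *\<^sub>R 0) 0 (axis l 1)) (nhds 0)"
    using ev_WW[OF assms(1), of "axis k 1" 0] by eventually_elim (simp add: pdy_L)
  show ?thesis unfolding pdx_def[of k]
    using deriv_cong_ev[OF ev refl] DERIV_imp_deriv[OF DL2[OF assms, where c=c and kx="axis k 1" and ky=0 and hx=0 and hy="axis l 1"]]
    by simp
qed


lemma alpha_eq: "alpha m x y = EE m x * nrm y"
  unfolding alpha_def EE_def nrm_def dot_def by (simp add: power2_eq_square)
lemma beta_eq: "beta b m x y = b * EE m x * bil x y / nrm x"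
  unfolding beta_def EE_def nrm_def dot_def bil_def by (simp add: power2_eq_square)
lemma ratio_eq: "beta b m x y / alpha m x y = SS b x y"
proof -
  have E: "EE m x \<noteq> 0" unfolding EE_def by simp
  show ?thesis unfolding alpha_eq beta_eq SS_def using E by simp
qed
lemma Fm_eq: "Fmetric b c m = FF b c m"
  by (intro ext) (simp only: Fmetric_def ratio_eq, simp add: alpha_eq FF_def)

lemma spray_main:
  assumes W: "WW b x y" and m: "m \<ge> 1" and inv: "invertible (fund_tensor (FF b c m) x y)"
  shows "spray (FF b c m) x y = (FF_h b c m x y y 0 / (2 * FF b c m x y)) *\<^sub>R y"
proof -
  from W have x: "x \<noteq> 0" and y: "y \<noteq> 0" and s: "\<bar>SS b x y\<bar> < b" by (auto simp: WW_def)
  have b: "b > 0" using s by linarith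
  define F where "F = FF b c m x y"
  define Q where "Q = FF_h b c m x y y 0"
  define fy where "fy = (\<chi> i. FF_h b c m x y 0 (axis i 1))"
  define g where "g = fund_tensor (FF b c m) x y"
  define v where "v = (\<chi> l. (\<Sum>k\<in>UNIV. pdx k (pdy l (\<lambda>x y. (FF b c m x y)^2)) x y * y $ k)
                          - pdx l (\<lambda>x y. (FF b c m x y)^2) x y)"
  have gij: "g$i$j = FF_h b c m x y 0 (axis i 1) * FF_h b c m x y 0 (axis j 1)
      + F * FF_hk b c m x y 0 (axis j 1) 0 (axis i 1)" for i j
    unfolding g_def fund_tensor_def F_def using pdy_pdy_L[OF W m] by simp
  have gy: "g *v y = F *\<^sub>R fy"
  proof (subst vec_eq_iff, intro allI)
    fix i
    have "(g *v y)$i = g$i$1 * y$1 + g$i$2 * y$2" by (simp add: matrix_vector_mult_def sum_2)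
    also have "\<dots> = FF_h b c m x y 0 (axis i 1) * (FF_h b c m x y 0 (axis 1 1) * y$1 + FF_h b c m x y 0 (axis 2 1) * y$2)
       + F * (FF_hk b c m x y 0 (axis 1 1) 0 (axis i 1) * y$1 + FF_hk b c m x y 0 (axis 2 1) 0 (axis i 1) * y$2)"
      unfolding gij by (simp add: algebra_simps)
    also have "\<dots> = FF_h b c m x y 0 (axis i 1) * F"
      unfolding LinC LinA[OF x y] E1g[OF x y b] E2g[OF x y b] F_def by simp
    finally show "(g *v y)$i = (F *\<^sub>R fy)$i" unfolding fy_def by simp
  qed
  have vv: "v = (2 * Q) *\<^sub>R fy"
  proof (subst vec_eq_iff, intro allI)
    fix l
    have "v$l = (pdx 1 (pdy l (\<lambda>x y. (FF b c m x y)^2)) x y * y $ 1 + pdx 2 (pdy l (\<lambda>x y. (FF b c m x y)^2)) x y * y $ 2)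
                          - pdx l (\<lambda>x y. (FF b c m x y)^2) x y" unfolding v_def by (simp add: sum_2)
    also have "\<dots> = 2 * FF_h b c m x y 0 (axis l 1) * (FF_h b c m x y (axis 1 1) 0 * y$1 + FF_h b c m x y (axis 2 1) 0 * y$2)
       + 2 * F * (FF_hk b c m x y 0 (axis l 1) (axis 1 1) 0 * y$1 + FF_hk b c m x y 0 (axis l 1) (axis 2 1) 0 * y$2)
       - 2 * F * FF_h b c m x y (axis l 1) 0"
      unfolding pdx_pdy_L[OF W m] pdx_L[OF W] F_def by (simp add: algebra_simps)
    also have "\<dots> = 2 * Q * FF_h b c m x y 0 (axis l 1)"
      unfolding LinD LinB H_gen[OF x y s m] Q_def by simp
    finally show "v$l = ((2 * Q) *\<^sub>R fy)$l" unfolding fy_def by simp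
  qed
  have gi: "matrix_inv g ** g = mat 1"
    using inv unfolding g_def invertible_def matrix_inv_def by (metis (mono_tags, lifting) someI_ex)
  have Fne: "F \<noteq> 0"
  proof
    assume "F = 0"
    then have "g *v y = 0" using gy by simp
    then have "matrix_inv g *v (g *v y) = 0" by simp
    then have "y = 0" by (simp add: matrix_vector_mul_assoc gi)
    then show False using y by simp
  qed
  have "matrix_inv g *v v = (2 * Q / F) *\<^sub>R y"
  proof -
    have "v = (2 * Q / F) *\<^sub>R (g *v y)" using vv gy Fne by simp
    then have "matrix_inv g *v v = (2 * Q / F) *\<^sub>R (matrix_inv g *v (g *v y))"
      by (simp add: matrix_vector_mult_scaleR)
    also have "\<dots> = (2 * Q / F) *\<^sub>R y" by (simp add: matrix_vector_mul_assoc gi)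
    finally show ?thesis .
  qed
  moreover have "spray (FF b c m) x y = (1/4) *\<^sub>R (matrix_inv g *v v)"
    unfolding spray_def Let_def g_def[symmetric] v_def
    by (simp add: matrix_vector_mult_def vec_eq_iff sum_distrib_left)
  ultimately show ?thesis unfolding Q_def[symmetric] F_def[symmetric] by simp
qed


lemma T_beta:
  assumes x: "x \<noteq> 0"
  shows "((\<lambda>t. beta b m (x + t *\<^sub>R k) h) has_real_derivative
     b * (EE_h m x k * bil x h / nrm x + EE m x * bil k h / nrm x - EE m x * bil x h * nrm_h x k / (nrm x)^2)) (at 0)"
proof -
  have e: "(\<lambda>t. beta b m (x + t *\<^sub>R k) h) = (\<lambda>t. b * EE m (x + t *\<^sub>R k) * bil (x + t *\<^sub>R k) h / nrm (x + t *\<^sub>R k))"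
    by (simp add: beta_eq)
  show ?thesis unfolding e
    apply (rule DERIV_cong)
    apply (rule derivative_eq_intros D_EE D_bil D_nrm refl x | (simp add: nrm_ne x; fail))+
    using nrm_pos[OF x] by (simp add: field_simps power2_eq_square)
qed

lemma not_closed:
  assumes "b > 0" "m \<ge> 1"
  shows "\<not> oneform_closed_on (UNIV - {0}) (beta b m)"
proof
  assume cl: "oneform_closed_on (UNIV - {0}) (beta b m)"
  define e1 :: "real^2" where "e1 = axis 1 1"
  define e2 :: "real^2" where "e2 = axis 2 1"
  have e1ne: "e1 \<noteq> 0" unfolding e1_def by (simp add: axis_eq_0_iff)
  have v: "e1$1 = 1" "e1$2 = 0" "e2$1 = 0" "e2$2 = 1" unfolding e1_def e2_def by (simp_all add: axis_def)
  have n1: "nrm e1 = 1" "dot e1 e1 = 1" "dot e1 e2 = 0" unfolding nrm_def dot_def using v by simp_all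
  have E1: "EE m e1 = 1" unfolding EE_def sigma_def using v by simp
  have "pdx 1 (\<lambda>x y. beta b m x (axis 2 1)) e1 0 = b * (- (2 * real m - 1))"
  proof -
    have "pdx 1 (\<lambda>x y. beta b m x (axis 2 1)) e1 0 = deriv (\<lambda>t. beta b m (e1 + t *\<^sub>R e1) e2) 0"
      unfolding pdx_def e1_def e2_def ..
    also have "\<dots> = b * (EE_h m e1 e1 * bil e1 e2 / nrm e1 + EE m e1 * bil e1 e2 / nrm e1
        - EE m e1 * bil e1 e2 * nrm_h e1 e1 / (nrm e1)^2)"
      by (rule DERIV_imp_deriv[OF T_beta[OF e1ne]])
    also have "\<dots> = b * (- (2 * real m - 1))"
      unfolding EE_h_def nrm_h_def n1 E1 bil_def v by simp
    finally show ?thesis .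
  qed
  moreover have "pdx 2 (\<lambda>x y. beta b m x (axis 1 1)) e1 0 = b"
  proof -
    have "pdx 2 (\<lambda>x y. beta b m x (axis 1 1)) e1 0 = deriv (\<lambda>t. beta b m (e1 + t *\<^sub>R e2) e1) 0"
      unfolding pdx_def e1_def e2_def ..
    also have "\<dots> = b * (EE_h m e1 e2 * bil e1 e1 / nrm e1 + EE m e1 * bil e2 e1 / nrm e1
        - EE m e1 * bil e1 e1 * nrm_h e1 e2 / (nrm e1)^2)"
      by (rule DERIV_imp_deriv[OF T_beta[OF e1ne]])
    also have "\<dots> = b"
      unfolding EE_h_def nrm_h_def n1 E1 bil_def v by simp
    finally show ?thesis .
  qed
  moreover have "pdx 1 (\<lambda>x y. beta b m x (axis 2 1)) e1 0 = pdx 2 (\<lambda>x y. beta b m x (axis 1 1)) e1 0"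
    using cl e1ne unfolding oneform_closed_on_def by blast
  ultimately have eq: "b * (- (2 * real m - 1)) = b" by simp
  have "b * (- (2 * real m - 1)) \<le> b * (-1)" using assms by (intro mult_left_mono) auto
  then show False using eq assms(1) by linarith
qed

theorem mainTheorem12:
  fixes b c :: real and m :: nat
  assumes "b > 0" and "m \<ge> 1"
  shows "projectively_flat_on
           {(x, y). x \<noteq> 0 \<and> y \<noteq> 0 \<and> \<bar>beta b m x y / alpha m x y\<bar> < b
                  \<and> invertible (fund_tensor (Fmetric b c m) x y)} (Fmetric b c m)
       \<and> \<not> oneform_closed_on (UNIV - {0}) (beta b m)"
proof
  show "projectively_flat_on
           {(x, y). x \<noteq> 0 \<and> y \<noteq> 0 \<and> \<bar>beta b m x y / alpha m x y\<bar> < b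
                  \<and> invertible (fund_tensor (Fmetric b c m) x y)} (Fmetric b c m)"
    unfolding projectively_flat_on_def Fm_eq ratio_eq
    using assms(2)
    by (auto intro!: exI[of _ "\<lambda>x y. FF_h b c m x y y 0 / (2 * FF b c m x y)"] spray_main simp: WW_def)
  show "\<not> oneform_closed_on (UNIV - {0}) (beta b m)" by (rule not_closed[OF assms])
qed

end
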